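(* Let $\mu$ be a translation invariant probability measure on $\mathcal{X}=\mathbb{N}^{\mathbb{Z}^d}$ with $\mathbb{E}_\mu(\eta(0))=\rho<\infty$, and suppose $\mu$ is stabilizable. Then $\mathbb{E}_\mu(\eta_\infty(0))=\rho$. Moreover, if $\mu$ is a translation invariant probability measure on $\mathcal{X}$ with $\mathbb{E}_\mu(\eta(0))=\infty$, then $\mu$ is not stabilizable.
   Context: Height configurations are elements of $\mathcal{X}=\mathbb{N}^{\mathbb{Z}^d}$; $\eta$ is stable if $\eta(x)\le 2d-1$ for all $x$. Toppling matrix: $\Delta_{x,y}=2d\mathbf{1}_{x=y}-\mathbf{1}_{|x-y|=1}$. A toppling procedure is a measurable map $T:[0,\infty)\times\mathbb{Z}^d\times\mathcal{X}\to\mathbb{N}$ such that for every $\eta$: $T(0,x,\eta)=0$; $t\mapsto T(t,x,\eta)$ is right-continuous, nondecreasing, with jumps of size at most one and finitely many jumps in each finite time interval; and there is no infinite chain of topplings at sites $x_1,x_2,\dots$ at times $t_1>t_2>\cdots$ with $x_{i+1}$ a neighbor of $x_i$. With $\eta_t=\eta-\Delta T(t,\cdot,\eta)$, $T$ is legal if every toppling at a site $x$ at time $t$ has $\eta_{t-}(x)\ge 2d$; a legal $T$ is stabilizing for $\eta$ if $T(\infty,x,\eta)=\lim_{t\to\infty}T(t,x,\eta)<\infty$ for all $x$ and $\eta_\infty=\eta-\Delta T(\infty,\cdot,\eta)$ is stable. $\eta$ is stabilizable if some legal toppling procedure is stabilizing for it, and then $\eta_\infty$ does not depend on the stabilizing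 procedure. A probability measure $\mu$ on $\mathcal{X}$ is stabilizable if $\mu$-almost every $\eta$ is stabilizable. *)

theory Defs
  imports "HOL-Probability.Probability"
begin

text \<open>Sites of the lattice Z^d are functions 'd \<Rightarrow> int for a finite index type 'd
  (d = CARD('d)). Height configurations are functions site \<Rightarrow> nat.\<close>

type_synonym 'd site = "'d \<Rightarrow> int"
type_synonym 'd config = "'d site \<Rightarrow> nat"

definition origin :: "'d site" where
  "origin = (\<lambda>_. 0)"

definition nbr :: "('d::finite) site \<Rightarrow> 'd site \<Rightarrow> bool" where
  "nbr x y \<longleftrightarrow> (\<Sum>i\<in>UNIV. \<bar>x i - y i\<bar>) = 1"

definition config_space :: "('d::finite) config measure" where
  "config_space = PiM UNIV (\<lambda>_. count_space UNIV)"

definition shift :: "('d::finite) site \<Rightarrow> 'd config \<Rightarrow> 'd config" where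
  "shift a \<eta> = (\<lambda>x. \<eta> (\<lambda>i. x i + a i))"

definition transl_inv :: "('d::finite) config measure \<Rightarrow> bool" where
  "transl_inv \<mu> \<longleftrightarrow> (\<forall>a. distr \<mu> config_space (shift a) = \<mu>)"

definition stable :: "('d::finite) config \<Rightarrow> bool" where
  "stable \<eta> \<longleftrightarrow> (\<forall>x. \<eta> x \<le> 2 * CARD('d) - 1)"

type_synonym 'd procedure = "real \<Rightarrow> 'd site \<Rightarrow> 'd config \<Rightarrow> nat"

definition lap :: "(('d::finite) site \<Rightarrow> int) \<Rightarrow> 'd site \<Rightarrow> int" where
  "lap f x = 2 * int CARD('d) * f x - (\<Sum>y\<in>{y. nbr x y}. f y)"

definition lft :: "('d::finite) procedure \<Rightarrow> 'd site \<Rightarrow> 'd config \<Rightarrow> real \<Rightarrow> nat" where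
  "lft T x \<eta> t = Lim (at_left t) (\<lambda>s. T s x \<eta>)"

definition topples :: "('d::finite) procedure \<Rightarrow> 'd site \<Rightarrow> 'd config \<Rightarrow> real \<Rightarrow> bool" where
  "topples T x \<eta> t \<longleftrightarrow> t > 0 \<and> lft T x \<eta> t < T t x \<eta>"

definition toppling_proc :: "('d::finite) procedure \<Rightarrow> bool" where
  "toppling_proc T \<longleftrightarrow>
     (\<lambda>(t, x, \<eta>). T t x \<eta>) \<in> measurable
        (restrict_space borel {0::real..} \<Otimes>\<^sub>M (count_space UNIV \<Otimes>\<^sub>M config_space))
        (count_space UNIV) \<and>
     (\<forall>\<eta>. (\<forall>x. T 0 x \<eta> = 0) \<and>
        (\<forall>x. \<forall>t\<ge>0. continuous (at_right t) (\<lambda>s. T s x \<eta>)) \<and>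
        (\<forall>x. mono_on {0..} (\<lambda>s. T s x \<eta>)) \<and>
        (\<forall>x. \<forall>t>0. T t x \<eta> \<le> lft T x \<eta> t + 1) \<and>
        (\<forall>x. \<forall>b\<ge>0. finite {t\<in>{0..b}. topples T x \<eta> t}) \<and>
        \<not> (\<exists>xs ts. \<forall>i. topples T (xs i) \<eta> (ts i) \<and> ts (Suc i) < ts i
                         \<and> nbr (xs i) (xs (Suc i))))"

definition conf_at :: "('d::finite) procedure \<Rightarrow> 'd config \<Rightarrow> real \<Rightarrow> 'd site \<Rightarrow> int" where
  "conf_at T \<eta> t x = int (\<eta> x) - lap (\<lambda>y. int (T t y \<eta>)) x"

definition conf_before :: "('d::finite) procedure \<Rightarrow> 'd config \<Rightarrow> real \<Rightarrow> 'd site \<Rightarrow> int" where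
  "conf_before T \<eta> t x = int (\<eta> x) - lap (\<lambda>y. int (lft T y \<eta> t)) x"

definition legal :: "('d::finite) procedure \<Rightarrow> 'd config \<Rightarrow> bool" where
  "legal T \<eta> \<longleftrightarrow> (\<forall>x t. topples T x \<eta> t \<longrightarrow> conf_before T \<eta> t x \<ge> 2 * int CARD('d))"

definition T_inf :: "('d::finite) procedure \<Rightarrow> 'd site \<Rightarrow> 'd config \<Rightarrow> nat" where
  "T_inf T x \<eta> = Lim at_top (\<lambda>t. T t x \<eta>)"

definition final_conf :: "('d::finite) procedure \<Rightarrow> 'd config \<Rightarrow> 'd site \<Rightarrow> int" where
  "final_conf T \<eta> x = int (\<eta> x) - lap (\<lambda>y. int (T_inf T y \<eta>)) x"

definition stabilizing :: "('d::finite) procedure \<Rightarrow> 'd config \<Rightarrow> bool" where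
  "stabilizing T \<eta> \<longleftrightarrow> legal T \<eta> \<and>
     (\<forall>x. \<exists>n. ((\<lambda>t. T t x \<eta>) \<longlongrightarrow> n) at_top) \<and>
     (\<forall>x. final_conf T \<eta> x \<le> 2 * int CARD('d) - 1)"

definition stabilizable :: "('d::finite) config \<Rightarrow> bool" where
  "stabilizable \<eta> \<longleftrightarrow> (\<exists>T. toppling_proc T \<and> legal T \<eta> \<and> stabilizing T \<eta>)"

text \<open>eta_infinity (independent of the chosen stabilizing procedure).\<close>
definition stab :: "('d::finite) config \<Rightarrow> 'd site \<Rightarrow> int" where
  "stab \<eta> = final_conf (SOME T. toppling_proc T \<and> legal T \<eta> \<and> stabilizing T \<eta>) \<eta>"

definition stabilizable_measure :: "('d::finite) config measure \<Rightarrow> bool" where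
  "stabilizable_measure \<mu> \<longleftrightarrow> (AE \<eta> in \<mu>. stabilizable \<eta>)"

end

theory Submission
  imports Defs
begin


lemma nat_tendsto_ev:
  fixes f :: "'a \<Rightarrow> nat"
  assumes "(f \<longlongrightarrow> a) F"
  shows "eventually (\<lambda>x. f x = a) F"
proof -
  have "eventually (\<lambda>x. f x \<in> {a}) F"
    using assms by (rule topological_tendstoD) (auto intro: discrete_topology_class.open_discrete)
  then show ?thesis by simp
qed

definition plus_site :: "('d::finite) site \<Rightarrow> 'd site \<Rightarrow> 'd site" where
  "plus_site x a = (\<lambda>i. x i + a i)"

lemma nbr_iff:
  fixes x y :: "('d::finite) site"
  shows "nbr x y \<longleftrightarrow> (\<exists>i b. y = x(i := x i + (if b then 1 else -1)))"
proof
  assume h: "nbr x y"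
  have s: "(\<Sum>i\<in>UNIV. \<bar>x i - y i\<bar>) = 1" using h by (simp add: nbr_def)
  have "\<exists>i. x i \<noteq> y i"
  proof (rule ccontr)
    assume "\<not> ?thesis" then have "(\<Sum>i\<in>UNIV. \<bar>x i - y i\<bar>) = 0" by simp
    with s show False by simp
  qed
  then obtain i where i: "x i \<noteq> y i" by blast
  have split: "(\<Sum>i\<in>UNIV. \<bar>x i - y i\<bar>) = \<bar>x i - y i\<bar> + (\<Sum>j\<in>UNIV-{i}. \<bar>x j - y j\<bar>)"
    by (simp add: sum.remove)
  have r0: "(\<Sum>j\<in>UNIV-{i}. \<bar>x j - y j\<bar>) \<ge> 0" by (simp add: sum_nonneg)
  have "\<bar>x i - y i\<bar> \<ge> 1" using i by linarith
  with s split r0 have a1: "\<bar>x i - y i\<bar> = 1" and r: "(\<Sum>j\<in>UNIV-{i}. \<bar>x j - y j\<bar>) = 0" by linarith+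
  have "\<forall>j\<in>UNIV-{i}. \<bar>x j - y j\<bar> = 0"
    using r by (subst (asm) sum_nonneg_eq_0_iff) auto
  then have oth: "\<And>j. j \<noteq> i \<Longrightarrow> y j = x j" by auto
  show "\<exists>i b. y = x(i := x i + (if b then 1 else -1))"
  proof (cases "y i = x i + 1")
    case True
    then show ?thesis by (intro exI[of _ i] exI[of _ True]) (auto simp: fun_eq_iff oth)
  next
    case False
    then have "y i = x i - 1" using a1 by linarith
    then show ?thesis by (intro exI[of _ i] exI[of _ False]) (auto simp: fun_eq_iff oth)
  qed
next
  assume "\<exists>i b. y = x(i := x i + (if b then 1 else -1))"
  then obtain i b where y: "y = x(i := x i + (if b then 1 else -1))" by blast
  have sp: "(\<Sum>j\<in>UNIV. \<bar>x j - y j\<bar>) = \<bar>x i - y i\<bar> + (\<Sum>j\<in>UNIV-{i}. \<bar>x j - y j\<bar>)"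
    by (simp add: sum.remove)
  have b0: "(\<Sum>j\<in>UNIV-{i}. \<bar>x j - y j\<bar>) = 0" by (rule sum.neutral) (auto simp: y)
  have a1: "\<bar>x i - y i\<bar> = 1" unfolding y by simp
  show "nbr x y" unfolding nbr_def using sp b0 a1 by linarith
qed

definition nstep :: "('d::finite) site \<Rightarrow> 'd \<times> bool \<Rightarrow> 'd site" where
  "nstep x p = x(fst p := x (fst p) + (if snd p then 1 else -1))"

lemma nbr_set: "{y. nbr x y} = nstep x ` UNIV"
proof (intro set_eqI iffI)
  fix y assume "y \<in> {y. nbr x y}"
  then obtain i b where "y = x(i := x i + (if b then 1 else -1))" unfolding nbr_iff by blast
  then have "y = nstep x (i,b)" by (simp add: nstep_def)
  then show "y \<in> range (nstep x)" by blast
next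
  fix y assume "y \<in> range (nstep x)"
  then obtain p where "y = nstep x p" by blast
  then show "y \<in> {y. nbr x y}" unfolding nbr_iff nstep_def by blast
qed

lemma inj_nstep: "inj (nstep x)"
proof (rule injI)
  fix p q assume h: "nstep x p = nstep x q"
  obtain i b where p: "p = (i,b)" by (cases p)
  obtain j c where q: "q = (j,c)" by (cases q)
  have hi: "nstep x p i = nstep x q i" using h by simp
  show "p = q"
  proof (cases "i = j")
    case True
    then show ?thesis using hi p q by (cases b; cases c) (simp_all add: nstep_def)
  next
    case False
    then show ?thesis using hi p q by (cases b; cases c) (simp_all add: nstep_def)
  qed
qed

lemma finite_nbr [simp]: "finite {y. nbr (x::('d::finite) site) y}"
  unfolding nbr_set by simp

lemma card_nbr: "card {y. nbr (x::('d::finite) site) y} = 2 * CARD('d)"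
  unfolding nbr_set by (simp add: card_image[OF inj_nstep] card_cartesian_product)

lemma nbr_plus: "nbr (plus_site x a) (plus_site y a) \<longleftrightarrow> nbr x y"
  by (simp add: nbr_def plus_site_def)

lemma nbr_set_plus: "{y. nbr (plus_site x a) y} = (\<lambda>y. plus_site y a) ` {y. nbr x y}"
proof (intro set_eqI iffI)
  fix z assume "z \<in> {y. nbr (plus_site x a) y}"
  then have n: "nbr (plus_site x a) z" by simp
  have e: "z = plus_site (plus_site z (\<lambda>i. - a i)) a"
    by (simp add: plus_site_def)
  have "nbr x (plus_site z (\<lambda>i. - a i))"
    using n by (subst (asm) e) (simp add: nbr_plus)
  then show "z \<in> (\<lambda>y. plus_site y a) ` {y. nbr x y}" using e by blast
next
  fix z assume "z \<in> (\<lambda>y. plus_site y a) ` {y. nbr x y}"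
  then show "z \<in> {y. nbr (plus_site x a) y}" by (auto simp: nbr_plus)
qed

lemma inj_plus: "inj (\<lambda>y. plus_site y a)"
  by (rule injI) (simp add: plus_site_def fun_eq_iff)

lemma lap_shift: "lap (\<lambda>y. f (plus_site y a)) x = lap f (plus_site x a)"
  unfolding lap_def nbr_set_plus
  by (simp add: sum.reindex inj_on_def plus_site_def fun_eq_iff)

lemma lap_cong: "f x = g x \<Longrightarrow> (\<And>y. nbr x y \<Longrightarrow> f y = g y) \<Longrightarrow> lap f x = lap g x"
  unfolding lap_def by (auto intro!: sum.cong)

lemma lap_add: "lap (\<lambda>y. f y + g y) x = lap f x + lap g x"
  unfolding lap_def by (simp add: sum.distrib algebra_simps)




fun u :: "nat \<Rightarrow> ('d::finite) config \<Rightarrow> 'd site \<Rightarrow> nat"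
and xi :: "nat \<Rightarrow> ('d::finite) config \<Rightarrow> 'd site \<Rightarrow> int" where
  "u 0 \<eta> x = 0"
| "u (Suc n) \<eta> x = u n \<eta> x + (if xi n \<eta> x \<ge> 2 * int CARD('d) then 1 else 0)"
| "xi n \<eta> x = int (\<eta> x) - lap (\<lambda>y. int (u n \<eta> y)) x"

declare xi.simps[simp del]

lemma u_le_n: "u n \<eta> x \<le> n"
  by (induction n arbitrary: x) (auto simp: le_SucI)

lemma u_mono: "m \<le> n \<Longrightarrow> u m \<eta> x \<le> u n \<eta> x"
proof (induction n)
  case 0 then show ?case by simp
next
  case (Suc n) then show ?case by (cases "m = Suc n") auto
qed

lemma lap_u_Suc:
  fixes x :: "('d::finite) site"
  shows "lap (\<lambda>y. int (u (Suc n) \<eta> y)) x =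
   lap (\<lambda>y. int (u n \<eta> y)) x + lap (\<lambda>y. if xi n \<eta> y \<ge> 2 * int CARD('d) then 1 else 0) x"
  by (simp add: lap_add[symmetric] if_distrib add.commute cong: if_cong)

lemma xi_Suc:
  fixes x :: "('d::finite) site"
  shows "xi (Suc n) \<eta> x = xi n \<eta> x - 2 * int CARD('d) * (if xi n \<eta> x \<ge> 2 * int CARD('d) then 1 else 0)
      + (\<Sum>y\<in>{y. nbr x y}. if xi n \<eta> y \<ge> 2 * int CARD('d) then 1 else 0)"
  by (simp only: xi.simps[of "Suc n"] xi.simps[of n] lap_u_Suc) (simp add: lap_def[of "\<lambda>y. if _ y then 1 else 0"])

lemma sum_ind_le: "(\<Sum>y\<in>{y. nbr (x::('d::finite) site) y}. if P y then 1 else (0::int)) \<le> 2 * int CARD('d)"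
proof -
  have "(\<Sum>y\<in>{y. nbr x y}. if P y then 1 else (0::int)) \<le> (\<Sum>y\<in>{y. nbr x y}. 1)"
    by (rule sum_mono) auto
  also have "\<dots> = 2 * int CARD('d)" using card_nbr[of x] by simp
  finally show ?thesis .
qed

lemma sum_ind_ge: "(\<Sum>y\<in>{y. nbr (x::('d::finite) site) y}. if P y then 1 else (0::int)) \<ge> 0"
  by (rule sum_nonneg) auto

lemma xi_bounds:
  fixes x :: "('d::finite) site"
  shows "0 \<le> xi n \<eta> x \<and> xi n \<eta> x \<le> max (int (\<eta> x)) (4 * int CARD('d) - 1)"
proof (induction n arbitrary: x)
  case 0 then show ?case by (simp add: xi.simps lap_def)
next
  case (Suc n)
  have a: "0 \<le> xi n \<eta> x" "xi n \<eta> x \<le> max (int (\<eta> x)) (4 * int CARD('d) - 1)" using Suc by auto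
  note s = xi_Suc[of n \<eta> x]
  note b1 = sum_ind_le[where x=x and P="\<lambda>y. xi n \<eta> y \<ge> 2 * int CARD('d)"]
  note b2 = sum_ind_ge[where x=x and P="\<lambda>y. xi n \<eta> y \<ge> 2 * int CARD('d)"]
  show ?case
  proof (cases "xi n \<eta> x \<ge> 2 * int CARD('d)")
    case True then show ?thesis using a s b1 b2 by simp
  next
    case False then show ?thesis using a s b1 b2 by simp
  qed
qed

lemma xi_shift_from_u:
  assumes "\<And>y. u n (shift a \<eta>) y = u n \<eta> (plus_site y a)"
  shows "xi n (shift a \<eta>) x = xi n \<eta> (plus_site x a)"
proof -
  have "lap (\<lambda>y. int (u n (shift a \<eta>) y)) x = lap (\<lambda>y. int (u n \<eta> (plus_site y a))) x"
    using assms by simp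
  also have "\<dots> = lap (\<lambda>y. int (u n \<eta> y)) (plus_site x a)" by (rule lap_shift)
  finally show ?thesis by (simp add: xi.simps shift_def plus_site_def)
qed

lemma u_shift: "u n (shift a \<eta>) x = u n \<eta> (plus_site x a)"
proof (induction n arbitrary: x)
  case 0 then show ?case by simp
next
  case (Suc n)
  have "xi n (shift a \<eta>) x = xi n \<eta> (plus_site x a)"
    by (rule xi_shift_from_u) (rule Suc.IH)
  then show ?case using Suc.IH by simp
qed

lemma xi_shift: "xi n (shift a \<eta>) x = xi n \<eta> (plus_site x a)"
  by (rule xi_shift_from_u) (rule u_shift)

lemma meas_eta [measurable]: "(\<lambda>\<eta>. \<eta> x) \<in> measurable config_space (count_space UNIV)"
  unfolding config_space_def by (rule measurable_component_singleton) simp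

lemma meas_eta_real [measurable]: "(\<lambda>\<eta>. real (\<eta> x)) \<in> borel_measurable config_space"
  by measurable

lemma meas_u_xi:
  fixes x :: "('d::finite) site"
  shows "(\<lambda>\<eta>. real (u n \<eta> x)) \<in> borel_measurable config_space \<and>
   (\<lambda>\<eta>. real_of_int (xi n \<eta> x)) \<in> borel_measurable config_space"
proof (induction n arbitrary: x)
  case 0
  show ?case by (simp add: xi.simps lap_def)
next
  case (Suc n)
  have m1[measurable]: "\<And>x::'d site. (\<lambda>\<eta>. real (u n \<eta> x)) \<in> borel_measurable config_space"
    by (rule Suc.IH[THEN conjunct1])
  have m2[measurable]: "\<And>x::'d site. (\<lambda>\<eta>. real_of_int (xi n \<eta> x)) \<in> borel_measurable config_space"
    by (rule Suc.IH[THEN conjunct2])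
  have e1: "(\<lambda>\<eta>. real (u (Suc n) \<eta> x)) = (\<lambda>\<eta>. real (u n \<eta> x) + (if 2 * real CARD('d) \<le> real_of_int (xi n \<eta> x) then 1 else 0))"
    for x :: "'d site"
    by (auto simp: fun_eq_iff)
  have mu[measurable]: "\<And>x::'d site. (\<lambda>\<eta>. real (u (Suc n) \<eta> x)) \<in> borel_measurable config_space"
    unfolding e1 by measurable
  have e2: "(\<lambda>\<eta>. real_of_int (xi (Suc n) \<eta> x)) = (\<lambda>\<eta>. real (\<eta> x) - (2 * real CARD('d) * real (u (Suc n) \<eta> x) - (\<Sum>y\<in>{y. nbr x y}. real (u (Suc n) \<eta> y))))"
    by (auto simp: fun_eq_iff xi.simps[of "Suc n"] lap_def)
  show ?case unfolding e2 by (intro conjI; measurable)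
qed



lemma Lim_left: "((f::real\<Rightarrow>nat) \<longlongrightarrow> c) (at_left t) \<Longrightarrow> Lim (at_left t) f = c"
  apply (erule tendsto_Lim[rotated])
  by simp

lemma left_const:
  fixes f :: "real \<Rightarrow> nat"
  assumes mono: "mono_on {0..} f" and t: "t > 0"
  shows "\<exists>s0. 0 \<le> s0 \<and> s0 < t \<and> (\<forall>s. s0 \<le> s \<and> s < t \<longrightarrow> f s = f s0) \<and> Lim (at_left t) f = f s0"
proof -
  let ?S = "f ` {0..<t}"
  have sub: "?S \<subseteq> {..f t}"
    using mono t by (auto intro!: mono_onD[OF mono])
  then have fin: "finite ?S" by (rule finite_subset) simp
  have ne: "?S \<noteq> {}" using t by auto
  obtain s0 where s0: "s0 \<in> {0..<t}" "f s0 = Max ?S"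
    using Max_in[OF fin ne] by auto
  have const: "f s = f s0" if "s0 \<le> s" "s < t" for s
  proof -
    have "f s0 \<le> f s" using that s0 by (intro mono_onD[OF mono]) auto
    moreover have "f s \<le> Max ?S" using that s0 fin by (intro Max_ge) auto
    ultimately show ?thesis using s0 by simp
  qed
  have ev: "eventually (\<lambda>s. f s = f s0) (at_left t)"
  proof -
    have "eventually (\<lambda>s. s \<in> {s0<..<t}) (at_left t)"
      using s0 by (intro eventually_at_left_real) auto
    then show ?thesis by eventually_elim (auto intro: const)
  qed
  have "(f \<longlongrightarrow> f s0) (at_left t)"
    using ev by (rule tendsto_eventually)
  then have "Lim (at_left t) f = f s0"
    by (rule Lim_left)
  moreover have "0 \<le> s0" "s0 < t" using s0 by auto
  ultimately show ?thesis using const by blast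
qed

lemma exceed_before:
  fixes f :: "real \<Rightarrow> nat"
  assumes mono: "mono_on {0..} f" and t: "t > 0" and c: "c < Lim (at_left t) f"
  shows "\<exists>s. 0 \<le> s \<and> s < t \<and> c < f s"
proof -
  obtain s0 where "0 \<le> s0" "s0 < t" "Lim (at_left t) f = f s0"
    using left_const[OF mono t] by blast
  then show ?thesis using c by (intro exI[of _ s0]) simp
qed

lemma first_exceed:
  fixes f :: "real \<Rightarrow> nat"
  assumes mono: "mono_on {0..} f" and f0: "f 0 \<le> c"
    and rc: "\<forall>t\<ge>0. continuous (at_right t) f"
    and jump: "\<forall>t>0. f t \<le> Lim (at_left t) f + 1"
    and s1: "0 \<le> s1" "c < f s1"
  shows "\<exists>t>0. t \<le> s1 \<and> Lim (at_left t) f < f t \<and> c \<le> Lim (at_left t) f"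
proof -
  define A where "A = {t. 0 \<le> t \<and> c < f t}"
  define ts where "ts = Inf A"
  have Ane: "A \<noteq> {}" using s1 by (auto simp: A_def)
  have bdd: "bdd_below A" by (auto simp: A_def bdd_below_def)
  have h1: "0 \<le> ts" unfolding ts_def using Ane by (intro cInf_greatest) (auto simp: A_def)
  have h2: "ts \<le> s1" unfolding ts_def using bdd s1 by (intro cInf_lower) (auto simp: A_def)
  have h3: "f s \<le> c" if "0 \<le> s" "s < ts" for s
  proof (rule ccontr)
    assume "\<not> f s \<le> c"
    then have "s \<in> A" using that by (auto simp: A_def)
    then have "ts \<le> s" unfolding ts_def using bdd by (rule cInf_lower)
    with that show False by simp
  qed
  have h4: "c < f ts"
  proof (rule ccontr)
    assume nc: "\<not> c < f ts"
    have "(f \<longlongrightarrow> f ts) (at_right ts)"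
      using rc h1 by (simp add: continuous_within)
    then have "eventually (\<lambda>s. f s = f ts) (at_right ts)" by (rule nat_tendsto_ev)
    then obtain b where b: "b > ts" "\<And>y. ts < y \<Longrightarrow> y < b \<Longrightarrow> f y = f ts"
      by (auto simp: eventually_at_right_field)
    have "Inf A < b" using b ts_def by simp
    then obtain a where a: "a \<in> A" "a < b" using cInf_less_iff[OF Ane bdd] by auto
    have "ts \<le> a" unfolding ts_def using bdd a by (intro cInf_lower)
    show False
    proof (cases "a = ts")
      case True then show False using a nc by (simp add: A_def)
    next
      case False
      then have "ts < a" using \<open>ts \<le> a\<close> by simp
      then have "f a = f ts" using b a by simp
      then show False using a nc by (simp add: A_def)
    qed
  qed
  have h5: "ts > 0"
  proof -
    have "ts \<noteq> 0" using h4 f0 by auto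
    with h1 show ?thesis by simp
  qed
  obtain s0 where s0: "0 \<le> s0" "s0 < ts" "Lim (at_left ts) f = f s0"
    using left_const[OF mono h5] by auto
  have L: "Lim (at_left ts) f \<le> c" using s0 h3 by simp
  have J: "f ts \<le> Lim (at_left ts) f + 1" using jump h5 by simp
  show ?thesis
    using h5 h2 L J h4 by (intro exI[of _ ts]) auto
qed



lemma proc_le_stable:
  fixes \<eta> :: "('d::finite) config" and v :: "'d site \<Rightarrow> nat"
  assumes tp: "toppling_proc T" and lg: "legal T \<eta>"
    and sv: "\<And>x. int (\<eta> x) - lap (\<lambda>y. int (v y)) x \<le> 2 * int CARD('d) - 1"
    and t0: "0 \<le> t0"
  shows "T t0 x0 \<eta> \<le> v x0"
proof (rule ccontr)
  assume nc: "\<not> T t0 x0 \<eta> \<le> v x0"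
  have T0: "\<And>x. T 0 x \<eta> = 0"
    and rc: "\<And>x. \<forall>t\<ge>0. continuous (at_right t) (\<lambda>s. T s x \<eta>)"
    and mono: "\<And>x. mono_on {0..} (\<lambda>s. T s x \<eta>)"
    and jump: "\<And>x. \<forall>t>0. T t x \<eta> \<le> lft T x \<eta> t + 1"
    and nochain: "\<not> (\<exists>xs ts. \<forall>i. topples T (xs i) \<eta> (ts i) \<and> ts (Suc i) < ts i
                         \<and> nbr (xs i) (xs (Suc i)))"
    using tp unfolding toppling_proc_def by blast+
  define Bad where "Bad = (\<lambda>p::'d site \<times> real. topples T (fst p) \<eta> (snd p) \<and> v (fst p) \<le> lft T (fst p) \<eta> (snd p))"
  have jx: "\<forall>t>0. T t x \<eta> \<le> Lim (at_left t) (\<lambda>s. T s x \<eta>) + 1" for x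
    using jump[of x] unfolding lft_def .
  have f0: "T 0 x \<eta> \<le> v x" for x using T0[of x] by simp
  have fe: "\<exists>t. Bad (x, t)" if hs: "0 \<le> s1" "v x < T s1 x \<eta>" for x s1
  proof -
    obtain t where "t > 0" "t \<le> s1" "lft T x \<eta> t < T t x \<eta>" "v x \<le> lft T x \<eta> t"
      using first_exceed[OF mono[of x] f0[of x] rc[of x] jx[of x] hs]
      unfolding lft_def by blast
    then show ?thesis unfolding Bad_def topples_def by auto
  qed
  have step: "\<exists>q. Bad q \<and> nbr (fst p) (fst q) \<and> snd q < snd p" if "Bad p" for p
  proof -
    obtain x t where p: "p = (x, t)" by (cases p)
    have tp': "topples T x \<eta> t" and vx: "v x \<le> lft T x \<eta> t" using that p by (auto simp: Bad_def)
    have tpos: "t > 0" using tp' by (simp add: topples_def)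
    have cb: "conf_before T \<eta> t x \<ge> 2 * int CARD('d)" using lg tp' by (simp add: legal_def)
    have "\<exists>y\<in>{y. nbr x y}. v y < lft T y \<eta> t"
    proof (rule ccontr)
      assume "\<not> ?thesis"
      then have "(\<Sum>y\<in>{y. nbr x y}. int (lft T y \<eta> t)) \<le> (\<Sum>y\<in>{y. nbr x y}. int (v y))"
        by (intro sum_mono) auto
      moreover have "2 * int CARD('d) * int (v x) \<le> 2 * int CARD('d) * int (lft T x \<eta> t)"
        using vx by (intro mult_left_mono) auto
      moreover have "int (\<eta> x) - (2 * int CARD('d) * int (lft T x \<eta> t) - (\<Sum>y\<in>{y. nbr x y}. int (lft T y \<eta> t))) \<ge> 2 * int CARD('d)"
        using cb by (simp add: conf_before_def lap_def)
      moreover have "int (\<eta> x) - (2 * int CARD('d) * int (v x) - (\<Sum>y\<in>{y. nbr x y}. int (v y))) \<le> 2 * int CARD('d) - 1"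
        using sv[of x] by (simp add: lap_def)
      ultimately show False by linarith
    qed
    then obtain y where y: "nbr x y" "v y < lft T y \<eta> t" by auto
    obtain s where s: "0 \<le> s" "s < t" "v y < T s y \<eta>"
      using exceed_before[OF mono[of y] tpos, of "v y"] y(2) unfolding lft_def by auto
    obtain t' where t': "t' > 0" "t' \<le> s" "lft T y \<eta> t' < T t' y \<eta>" "v y \<le> lft T y \<eta> t'"
      using first_exceed[OF mono[of y] f0[of y] rc[of y] jx[of y] s(1) s(3)]
      unfolding lft_def by blast
    have "Bad (y, t')" using t' unfolding Bad_def topples_def by auto
    then show ?thesis using y s t' p by (intro exI[of _ "(y,t')"]) auto
  qed
  have "\<exists>t. Bad (x0, t)" using fe[OF t0] nc by simp
  then obtain f where f: "\<forall>n. Bad (f n) \<and> (nbr (fst (f n)) (fst (f (Suc n))) \<and> snd (f (Suc n)) < snd (f n))"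
    using dependent_nat_choice[of "\<lambda>_. Bad" "\<lambda>_ p q. nbr (fst p) (fst q) \<and> snd q < snd p"] step
    by blast
  have "\<forall>i. topples T (fst (f i)) \<eta> (snd (f i)) \<and> snd (f (Suc i)) < snd (f i)
                         \<and> nbr (fst (f i)) (fst (f (Suc i)))"
    using f by (auto simp: Bad_def)
  then have "\<exists>xs ts. \<forall>i. topples T (xs i) \<eta> (ts i) \<and> ts (Suc i) < ts i
                         \<and> nbr (xs i) (xs (Suc i))"
    by (intro exI[of _ "\<lambda>i. fst (f i)"] exI[of _ "\<lambda>i. snd (f i)"])
  then show False using nochain by blast
qed

lemma u_le_Tinf:
  fixes \<eta> :: "('d::finite) config"
  assumes st: "stabilizing T \<eta>"
  shows "u n \<eta> x \<le> T_inf T x \<eta>"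
proof (induction n arbitrary: x)
  case 0 then show ?case by simp
next
  case (Suc n)
  show ?case
  proof (cases "xi n \<eta> x \<ge> 2 * int CARD('d) \<and> u n \<eta> x = T_inf T x \<eta>")
    case True
    have fin: "final_conf T \<eta> x \<le> 2 * int CARD('d) - 1" using st by (simp add: stabilizing_def)
    have "(\<Sum>y\<in>{y. nbr x y}. int (u n \<eta> y)) \<le> (\<Sum>y\<in>{y. nbr x y}. int (T_inf T y \<eta>))"
      using Suc.IH by (intro sum_mono) simp
    then have "xi n \<eta> x \<le> final_conf T \<eta> x"
      using True by (simp add: xi.simps final_conf_def lap_def)
    then show ?thesis using True fin by simp
  next
    case False
    then show ?thesis using Suc.IH[of x] by (auto simp: le_less)
  qed
qed



lemma mono_bdd_ev_const:
  fixes g :: "nat \<Rightarrow> nat"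
  assumes m: "\<And>m n. m \<le> n \<Longrightarrow> g m \<le> g n" and b: "\<And>n. g n \<le> B"
  shows "\<exists>N. \<forall>n\<ge>N. g n = g N"
proof -
  have "range g \<subseteq> {..B}" using b by auto
  then have fin: "finite (range g)" by (rule finite_subset) simp
  have "Max (range g) \<in> range g" using fin by (intro Max_in) auto
  then obtain N where N: "Max (range g) = g N" by blast
  have "g n = g N" if "n \<ge> N" for n
  proof -
    have "g n \<le> Max (range g)" using fin by (intro Max_ge) auto
    then show ?thesis using m[OF that] N by linarith
  qed
  then show ?thesis by blast
qed

lemma Tinf_eq:
  assumes "((\<lambda>t. T t x \<eta>) \<longlongrightarrow> n) at_top"
  shows "T_inf T x \<eta> = n"
  unfolding T_inf_def using assms by (rule tendsto_Lim[rotated]) simp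

lemma stab_props:
  fixes \<eta> :: "('d::finite) config" and x :: "'d site"
  assumes sb: "stabilizable \<eta>"
  shows "\<exists>N. \<forall>n\<ge>N. xi n \<eta> x = stab \<eta> x" and "stab \<eta> x \<le> 2 * int CARD('d) - 1"
proof -
  define T where "T = (SOME T. toppling_proc T \<and> legal T \<eta> \<and> stabilizing T \<eta>)"
  have TT: "toppling_proc T \<and> legal T \<eta> \<and> stabilizing T \<eta>"
    using sb unfolding stabilizable_def T_def by (rule someI_ex)
  then have tp: "toppling_proc T" and lg: "legal T \<eta>" and st: "stabilizing T \<eta>" by blast+
  have stab_eq: "stab \<eta> = final_conf T \<eta>" unfolding stab_def T_def ..
  have bd: "u n \<eta> z \<le> T_inf T z \<eta>" for n z by (rule u_le_Tinf[OF st])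
  have "\<forall>z. \<exists>N. \<forall>n\<ge>N. u n \<eta> z = u N \<eta> z"
  proof
    fix z show "\<exists>N. \<forall>n\<ge>N. u n \<eta> z = u N \<eta> z"
      by (rule mono_bdd_ev_const[where B="T_inf T z \<eta>"]) (auto intro: u_mono bd)
  qed
  then have "\<exists>Nf. \<forall>z. \<forall>n\<ge>Nf z. u n \<eta> z = u (Nf z) \<eta> z" by (rule choice)
  then obtain Nf where Nf0: "\<forall>z. \<forall>n\<ge>Nf z. u n \<eta> z = u (Nf z) \<eta> z" by blast
  have Nf: "\<And>z n. n \<ge> Nf z \<Longrightarrow> u n \<eta> z = u (Nf z) \<eta> z" using Nf0 by blast
  define V where "V z = u (Nf z) \<eta> z" for z
  have loc: "\<exists>N. \<forall>n\<ge>N. \<forall>z\<in>insert x0 {y. nbr x0 y}. u n \<eta> z = V z" for x0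
  proof -
    define N where "N = Max (Nf ` insert x0 {y. nbr x0 y})"
    have NN: "Nf z \<le> N" if "z \<in> insert x0 {y. nbr x0 y}" for z
      unfolding N_def using that by (intro Max_ge) auto
    show ?thesis
    proof (intro exI[of _ N] allI impI ballI)
      fix n z assume "N \<le> n" "z \<in> insert x0 {y. nbr x0 y}"
      then have "Nf z \<le> n" using NN by (meson order_trans)
      then show "u n \<eta> z = V z" unfolding V_def by (rule Nf)
    qed
  qed
  have xi_loc: "\<exists>N. \<forall>n\<ge>N. xi n \<eta> x0 = int (\<eta> x0) - lap (\<lambda>y. int (V y)) x0" for x0
  proof -
    obtain N where N: "\<forall>n\<ge>N. \<forall>z\<in>insert x0 {y. nbr x0 y}. u n \<eta> z = V z" using loc by blast
    have "xi n \<eta> x0 = int (\<eta> x0) - lap (\<lambda>y. int (V y)) x0" if "n \<ge> N" for n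
    proof -
      have "lap (\<lambda>y. int (u n \<eta> y)) x0 = lap (\<lambda>y. int (V y)) x0"
        using N that by (intro lap_cong) auto
      then show ?thesis by (simp add: xi.simps)
    qed
    then show ?thesis by blast
  qed
  have sv: "int (\<eta> x0) - lap (\<lambda>y. int (V y)) x0 \<le> 2 * int CARD('d) - 1" for x0
  proof (rule ccontr)
    assume nc: "\<not> ?thesis"
    obtain N where N: "\<forall>n\<ge>N. \<forall>z\<in>insert x0 {y. nbr x0 y}. u n \<eta> z = V z" using loc by blast
    obtain N2 where N2: "\<forall>n\<ge>N2. xi n \<eta> x0 = int (\<eta> x0) - lap (\<lambda>y. int (V y)) x0" using xi_loc by blast
    let ?n = "max N N2"
    have "xi ?n \<eta> x0 \<ge> 2 * int CARD('d)" using N2 nc by simp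
    then have e: "u (Suc ?n) \<eta> x0 = u ?n \<eta> x0 + 1" by simp
    have a1: "u (Suc ?n) \<eta> x0 = V x0" using N[rule_format, of "Suc ?n" x0] by simp
    have a2: "u ?n \<eta> x0 = V x0" using N[rule_format, of "?n" x0] by simp
    from e a1 a2 show False by linarith
  qed
  have TV: "T_inf T z \<eta> = V z" for z
  proof (rule antisym)
    obtain m where m: "((\<lambda>t. T t z \<eta>) \<longlongrightarrow> m) at_top" using st by (auto simp: stabilizing_def)
    have "eventually (\<lambda>t. T t z \<eta> = m \<and> t \<ge> 0) at_top"
      using nat_tendsto_ev[OF m] eventually_ge_at_top[of "0::real"] by (rule eventually_conj)
    then obtain t0 :: real where "\<forall>t\<ge>t0. T t z \<eta> = m \<and> t \<ge> 0"
      unfolding eventually_at_top_linorder by blast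
    then have t: "T t0 z \<eta> = m" "t0 \<ge> 0" by auto
    have "T t0 z \<eta> \<le> V z" by (rule proc_le_stable[OF tp lg sv t(2)])
    then show "T_inf T z \<eta> \<le> V z" using Tinf_eq[of T z \<eta> m, OF m] t by simp
  next
    show "V z \<le> T_inf T z \<eta>" unfolding V_def by (rule bd)
  qed
  obtain N where N: "\<forall>n\<ge>N. xi n \<eta> x = int (\<eta> x) - lap (\<lambda>y. int (V y)) x" using xi_loc by blast
  have se: "stab \<eta> x = int (\<eta> x) - lap (\<lambda>y. int (V y)) x"
    unfolding stab_eq final_conf_def TV ..
  show "\<exists>N. \<forall>n\<ge>N. xi n \<eta> x = stab \<eta> x"
  proof (intro exI allI impI)
    fix n assume "N \<le> n"
    then have "xi n \<eta> x = int (\<eta> x) - lap (\<lambda>y. int (V y)) x" using N by blast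
    then show "xi n \<eta> x = stab \<eta> x" using se by simp
  qed
  show "stab \<eta> x \<le> 2 * int CARD('d) - 1"
  proof -
    have "\<forall>x. final_conf T \<eta> x \<le> 2 * int CARD('d) - 1" using st[unfolded stabilizing_def] by (rule conjunct2[OF conjunct2])
    then show ?thesis unfolding stab_eq by (rule spec)
  qed
qed



lemma shift_meas: "shift a \<in> measurable config_space (config_space :: ('d::finite) config measure)"
  unfolding config_space_def shift_def
  by (rule measurable_PiM_single') (auto intro: measurable_component_singleton)

lemma of_nat_nat_enn: "(of_nat (nat z) :: ennreal) = ennreal (real_of_int z)"
  by (cases "z \<ge> 0") (auto simp: ennreal_of_nat_eq_real_of_nat ennreal_neg)

lemma meas_u_enn [measurable]:
  "(\<lambda>\<eta>. (of_nat (u n \<eta> x) :: ennreal)) \<in> borel_measurable (config_space :: ('d::finite) config measure)"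
proof -
  have m[measurable]: "(\<lambda>\<eta>. real (u n \<eta> x)) \<in> borel_measurable (config_space :: ('d::finite) config measure)"
    using meas_u_xi by blast
  show ?thesis unfolding ennreal_of_nat_eq_real_of_nat by measurable
qed

lemma meas_xi_enn [measurable]:
  "(\<lambda>\<eta>. (of_nat (nat (c + xi n \<eta> x)) :: ennreal)) \<in> borel_measurable (config_space :: ('d::finite) config measure)"
  "(\<lambda>\<eta>. (of_nat (nat (c - xi n \<eta> x)) :: ennreal)) \<in> borel_measurable (config_space :: ('d::finite) config measure)"
  "(\<lambda>\<eta>. (of_nat (nat (c + int (\<eta> y) - xi n \<eta> x)) :: ennreal)) \<in> borel_measurable (config_space :: ('d::finite) config measure)"
proof -
  have m[measurable]: "(\<lambda>\<eta>. real_of_int (xi n \<eta> x)) \<in> borel_measurable (config_space :: ('d::finite) config measure)"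
    using meas_u_xi by blast
  show "(\<lambda>\<eta>. (of_nat (nat (c + xi n \<eta> x)) :: ennreal)) \<in> borel_measurable (config_space :: ('d::finite) config measure)"
    unfolding of_nat_nat_enn of_int_add of_int_diff by measurable
  show "(\<lambda>\<eta>. (of_nat (nat (c - xi n \<eta> x)) :: ennreal)) \<in> borel_measurable (config_space :: ('d::finite) config measure)"
    unfolding of_nat_nat_enn of_int_add of_int_diff by measurable
  show "(\<lambda>\<eta>. (of_nat (nat (c + int (\<eta> y) - xi n \<eta> x)) :: ennreal)) \<in> borel_measurable (config_space :: ('d::finite) config measure)"
    unfolding of_nat_nat_enn of_int_add of_int_diff by measurable
qed

lemma meas_eta_enn [measurable]:
  "(\<lambda>\<eta>. (of_nat (\<eta> x) :: ennreal)) \<in> borel_measurable (config_space :: ('d::finite) config measure)"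
  unfolding ennreal_of_nat_eq_real_of_nat by measurable

lemma int_shift:
  fixes \<mu> :: "('d::finite) config measure"
  assumes sets: "sets \<mu> = sets config_space" and ti: "transl_inv \<mu>"
    and f: "f \<in> borel_measurable config_space"
  shows "(\<integral>\<^sup>+\<eta>. f (shift a \<eta>) \<partial>\<mu>) = (\<integral>\<^sup>+\<eta>. f \<eta> \<partial>\<mu>)"
proof -
  have sm: "shift a \<in> measurable \<mu> config_space"
    using shift_meas measurable_cong_sets[OF sets refl] by blast
  have "(\<integral>\<^sup>+\<eta>. f (shift a \<eta>) \<partial>\<mu>) = (\<integral>\<^sup>+\<eta>. f \<eta> \<partial>(distr \<mu> config_space (shift a)))"
  proof -
    have "f \<in> borel_measurable (distr \<mu> config_space (shift a))" using f by simp
    then show ?thesis by (rule nn_integral_distr[OF sm, symmetric])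
  qed
  also have "distr \<mu> config_space (shift a) = \<mu>" using ti by (simp add: transl_inv_def)
  finally show ?thesis .
qed

lemma plus_origin: "plus_site origin y = y"
  by (simp add: plus_site_def origin_def)

lemma int_u_const:
  fixes \<mu> :: "('d::finite) config measure"
  assumes sets: "sets \<mu> = sets config_space" and ti: "transl_inv \<mu>"
  shows "(\<integral>\<^sup>+\<eta>. of_nat (u n \<eta> y) \<partial>\<mu>) = (\<integral>\<^sup>+\<eta>. of_nat (u n \<eta> origin) \<partial>\<mu>)"
proof -
  have "(\<integral>\<^sup>+\<eta>. of_nat (u n \<eta> y) \<partial>\<mu>) = (\<integral>\<^sup>+\<eta>. of_nat (u n (shift y \<eta>) origin) \<partial>\<mu>)"
    by (simp add: u_shift plus_origin)
  also have "\<dots> = (\<integral>\<^sup>+\<eta>. of_nat (u n \<eta> origin) \<partial>\<mu>)"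
    by (rule int_shift[OF sets ti, of "\<lambda>\<eta>. of_nat (u n \<eta> origin)"]) measurable
  finally show ?thesis .
qed



lemma liminf_evc:
  fixes f :: "nat \<Rightarrow> ennreal"
  assumes "\<forall>n\<ge>N. f n = c"
  shows "liminf f = c"
proof -
  have "eventually (\<lambda>n. f n = c) sequentially" using assms by (auto simp: eventually_sequentially)
  then have "(f \<longlongrightarrow> c) sequentially" by (rule tendsto_eventually)
  then show ?thesis by (intro lim_imp_Liminf) simp_all
qed

lemma lap_origin:
  "lap f (origin :: ('d::finite) site) = 2 * int CARD('d) * f origin - (\<Sum>y\<in>{y. nbr origin y}. f y)"
  by (simp add: lap_def)

lemma xi_origin:
  fixes \<eta> :: "('d::finite) config"
  shows "xi n \<eta> origin = int (\<eta> origin) - 2 * int CARD('d) * int (u n \<eta> origin) + (\<Sum>y\<in>{y. nbr origin y}. int (u n \<eta> y))"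
  by (simp add: xi.simps lap_def)

lemma I1:
  fixes \<eta> :: "('d::finite) config"
  shows "nat (xi n \<eta> origin) + 2 * CARD('d) * u n \<eta> origin = \<eta> origin + (\<Sum>y\<in>{y. nbr origin y}. u n \<eta> y)"
proof -
  have nn: "0 \<le> xi n \<eta> origin" using xi_bounds by blast
  have "int (nat (xi n \<eta> origin) + 2 * CARD('d) * u n \<eta> origin) = int (\<eta> origin + (\<Sum>y\<in>{y. nbr origin y}. u n \<eta> y))"
    using nn xi_origin[of n \<eta>] by (simp add: of_nat_sum)
  then show ?thesis by (simp only: of_nat_eq_iff)
qed

lemma I2:
  fixes \<eta> :: "('d::finite) config"
  shows "nat (int (4 * CARD('d)) - 1 + int (\<eta> origin) - xi n \<eta> origin) + (\<Sum>y\<in>{y. nbr origin y}. u n \<eta> y)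
     = (4 * CARD('d) - 1) + 2 * CARD('d) * u n \<eta> origin"
proof -
  have ub: "xi n \<eta> origin \<le> max (int (\<eta> origin)) (4 * int CARD('d) - 1)" using xi_bounds by blast
  have K: "CARD('d) \<ge> 1" by (simp add: Suc_le_eq)
  then have Ki: "int CARD('d) \<ge> 1" by simp
  have nn: "0 \<le> int (4 * CARD('d)) - 1 + int (\<eta> origin) - xi n \<eta> origin"
  proof -
    have o: "xi n \<eta> origin \<le> int (\<eta> origin) \<or> xi n \<eta> origin \<le> 4 * int CARD('d) - 1"
      using ub by (metis max_def)
    have "int (4 * CARD('d)) = 4 * int CARD('d)" by simp
    then show ?thesis using o Ki by linarith
  qed
  have e: "int (4 * CARD('d) - 1) = int (4 * CARD('d)) - 1" using K by simp
  have l: "int (nat (int (4 * CARD('d)) - 1 + int (\<eta> origin) - xi n \<eta> origin) + (\<Sum>y\<in>{y. nbr origin y}. u n \<eta> y))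
      = (int (4 * CARD('d)) - 1 + int (\<eta> origin) - xi n \<eta> origin) + (\<Sum>y\<in>{y. nbr origin y}. int (u n \<eta> y))"
    using nn by (simp add: of_nat_sum)
  have e2: "int (4 * CARD('d) - 1 + 2 * CARD('d) * u n \<eta> origin) = int (4 * CARD('d)) - 1 + 2 * int CARD('d) * int (u n \<eta> origin)"
    apply (subst of_nat_add)
    apply (subst of_nat_diff)
    using K by simp_all
  have "int (nat (int (4 * CARD('d)) - 1 + int (\<eta> origin) - xi n \<eta> origin) + (\<Sum>y\<in>{y. nbr origin y}. u n \<eta> y))
      = int ((4 * CARD('d) - 1) + 2 * CARD('d) * u n \<eta> origin)"
    unfolding l e2 using xi_origin[of n \<eta>] by linarith
  then show ?thesis by (simp only: of_nat_eq_iff)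
qed



lemma main_lemma:
  fixes \<mu> :: "(('d::finite) config) measure"
  assumes P: "prob_space \<mu>" and S: "sets \<mu> = sets config_space" and TI: "transl_inv \<mu>"
    and SM: "stabilizable_measure \<mu>"
  shows "(\<integral>\<^sup>+ \<eta>. ennreal (real_of_int (stab \<eta> origin)) \<partial>\<mu>) = (\<integral>\<^sup>+ \<eta>. of_nat (\<eta> origin) \<partial>\<mu>)
     \<and> (\<integral>\<^sup>+ \<eta>. of_nat (\<eta> origin) \<partial>\<mu>) < \<infinity>"
proof -
  let ?K = "CARD('d)"
  define \<rho> where "\<rho> = (\<integral>\<^sup>+ \<eta>. of_nat (\<eta> origin) \<partial>\<mu>)"
  define N0 where "N0 = {y::'d site. nbr origin y}"
  have cN0: "card N0 = 2 * ?K" unfolding N0_def by (rule card_nbr)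
  have fN0: "finite N0" unfolding N0_def by simp
  have mc: "borel_measurable \<mu> = borel_measurable config_space"
    by (rule measurable_cong_sets[OF S refl])
  have sp1: "emeasure \<mu> (space \<mu>) = 1" using P by (simp add: prob_space.emeasure_space_1)
  have int_const: "(\<integral>\<^sup>+ \<eta>. c \<partial>\<mu>) = c" for c :: ennreal
    using sp1 by simp
  define a where "a n \<eta> = (of_nat (nat (0 + xi n \<eta> origin)) :: ennreal)" for n and \<eta> :: "'d config"
  define b where "b n \<eta> = (of_nat (nat (int (4 * ?K) - 1 + int (\<eta> origin) - xi n \<eta> origin)) :: ennreal)" for n and \<eta> :: "'d config"
  define r where "r n \<eta> = (of_nat (nat (int (4 * ?K) - 1 - xi n \<eta> origin)) :: ennreal)" for n and \<eta> :: "'d config"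
  have ma[measurable]: "a n \<in> borel_measurable \<mu>" for n unfolding mc a_def by measurable
  have mb[measurable]: "b n \<in> borel_measurable \<mu>" for n unfolding mc b_def by measurable
  have mr[measurable]: "r n \<in> borel_measurable \<mu>" for n unfolding mc r_def by measurable
  have mu[measurable]: "(\<lambda>\<eta>. (of_nat (u n \<eta> x) :: ennreal)) \<in> borel_measurable \<mu>" for n x unfolding mc by measurable
  have meta[measurable]: "(\<lambda>\<eta>. (of_nat (\<eta> origin) :: ennreal)) \<in> borel_measurable \<mu>" unfolding mc by measurable
  define c where "c n = (\<integral>\<^sup>+\<eta>. of_nat (u n \<eta> origin) \<partial>\<mu>)" for n
  have cfin: "c n \<noteq> \<infinity>" for n
  proof -
    have "c n \<le> (\<integral>\<^sup>+\<eta>. of_nat n \<partial>\<mu>)" unfolding c_def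
      by (intro nn_integral_mono) (simp add: u_le_n)
    also have "\<dots> = of_nat n" by (rule int_const)
    finally show ?thesis by (auto simp: top_unique)
  qed
  have cu: "(\<integral>\<^sup>+\<eta>. of_nat (u n \<eta> y) \<partial>\<mu>) = c n" for n y
    unfolding c_def by (rule int_u_const[OF S TI])
  have sumc: "(\<integral>\<^sup>+\<eta>. (\<Sum>y\<in>N0. (of_nat (u n \<eta> y) :: ennreal)) \<partial>\<mu>) = of_nat (2 * ?K) * c n" for n
    using mu by (simp add: nn_integral_sum cu cN0)
  have twoc: "(\<integral>\<^sup>+\<eta>. of_nat (2 * ?K) * (of_nat (u n \<eta> origin) :: ennreal) \<partial>\<mu>) = of_nat (2 * ?K) * c n" for n
    unfolding c_def using mu by (simp add: nn_integral_cmult)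
  have fin2: "of_nat (2 * ?K) * c n \<noteq> \<infinity>" for n
    using cfin[of n] by (simp add: ennreal_mult_eq_top_iff)
  have Ea: "(\<integral>\<^sup>+\<eta>. a n \<eta> \<partial>\<mu>) = \<rho>" for n
  proof -
    have pw: "a n \<eta> + of_nat (2 * ?K) * of_nat (u n \<eta> origin) = of_nat (\<eta> origin) + (\<Sum>y\<in>N0. of_nat (u n \<eta> y))" for \<eta>
    proof -
      have "of_nat (nat (xi n \<eta> origin) + 2 * ?K * u n \<eta> origin) = (of_nat (\<eta> origin + (\<Sum>y\<in>N0. u n \<eta> y)) :: ennreal)"
        unfolding N0_def by (subst I1) simp
      then show ?thesis unfolding a_def by (simp add: of_nat_sum)
    qed
    have "(\<integral>\<^sup>+\<eta>. a n \<eta> + of_nat (2 * ?K) * of_nat (u n \<eta> origin) \<partial>\<mu>) = (\<integral>\<^sup>+\<eta>. a n \<eta> \<partial>\<mu>) + (\<integral>\<^sup>+\<eta>. of_nat (2 * ?K) * (of_nat (u n \<eta> origin) :: ennreal) \<partial>\<mu>)"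
      by (rule nn_integral_add) measurable
    then have "(\<integral>\<^sup>+\<eta>. a n \<eta> \<partial>\<mu>) + of_nat (2 * ?K) * c n = (\<integral>\<^sup>+\<eta>. a n \<eta> + of_nat (2 * ?K) * of_nat (u n \<eta> origin) \<partial>\<mu>)"
      by (simp only: twoc)
    also have "\<dots> = (\<integral>\<^sup>+\<eta>. of_nat (\<eta> origin) + (\<Sum>y\<in>N0. of_nat (u n \<eta> y)) \<partial>\<mu>)"
      by (simp only: pw)
    also have "\<dots> = \<rho> + of_nat (2 * ?K) * c n"
      unfolding \<rho>_def using meta mu by (simp add: nn_integral_add sumc)
    finally show ?thesis using fin2[of n]
      by (metis add.commute ennreal_add_left_cancel)
  qed
  have Eb: "(\<integral>\<^sup>+\<eta>. b n \<eta> \<partial>\<mu>) = of_nat (4 * ?K - 1)" for n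
  proof -
    have pw: "b n \<eta> + (\<Sum>y\<in>N0. of_nat (u n \<eta> y)) = of_nat (4 * ?K - 1) + of_nat (2 * ?K) * of_nat (u n \<eta> origin)" for \<eta>
    proof -
      have "of_nat (nat (int (4 * ?K) - 1 + int (\<eta> origin) - xi n \<eta> origin) + (\<Sum>y\<in>N0. u n \<eta> y))
          = (of_nat (4 * ?K - 1 + 2 * ?K * u n \<eta> origin) :: ennreal)"
        unfolding N0_def by (subst I2) simp
      then show ?thesis unfolding b_def by (simp only: of_nat_add of_nat_sum of_nat_mult)
    qed
    have "(\<integral>\<^sup>+\<eta>. b n \<eta> \<partial>\<mu>) + of_nat (2 * ?K) * c n = (\<integral>\<^sup>+\<eta>. b n \<eta> + (\<Sum>y\<in>N0. of_nat (u n \<eta> y)) \<partial>\<mu>)"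
      using mb mu by (simp add: nn_integral_add sumc)
    also have "\<dots> = (\<integral>\<^sup>+\<eta>. of_nat (4 * ?K - 1) + of_nat (2 * ?K) * of_nat (u n \<eta> origin) \<partial>\<mu>)"
      by (simp only: pw)
    also have "\<dots> = (\<integral>\<^sup>+\<eta>. of_nat (4 * ?K - 1) \<partial>\<mu>) + (\<integral>\<^sup>+\<eta>. of_nat (2 * ?K) * (of_nat (u n \<eta> origin) :: ennreal) \<partial>\<mu>)"
      by (rule nn_integral_add) measurable
    also have "\<dots> = of_nat (4 * ?K - 1) + of_nat (2 * ?K) * c n"
      by (simp only: twoc int_const)
    finally show ?thesis using fin2[of n]
      by (metis add.commute ennreal_add_left_cancel)
  qed
  define SS where "SS \<eta> = liminf (\<lambda>n. a n \<eta>)" for \<eta> :: "'d config"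
  define BB where "BB \<eta> = liminf (\<lambda>n. b n \<eta>)" for \<eta> :: "'d config"
  define RR where "RR \<eta> = liminf (\<lambda>n. r n \<eta>)" for \<eta> :: "'d config"
  have mSS: "SS \<in> borel_measurable \<mu>" unfolding SS_def using ma by measurable
  have mRR: "RR \<in> borel_measurable \<mu>" unfolding RR_def using mr by measurable
  have FS: "(\<integral>\<^sup>+\<eta>. SS \<eta> \<partial>\<mu>) \<le> \<rho>"
  proof -
    have "(\<integral>\<^sup>+\<eta>. SS \<eta> \<partial>\<mu>) \<le> liminf (\<lambda>n. \<integral>\<^sup>+\<eta>. a n \<eta> \<partial>\<mu>)"
      unfolding SS_def by (rule nn_integral_liminf[OF ma])
    also have "\<dots> = \<rho>" by (simp add: Ea Liminf_const)
    finally show ?thesis .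
  qed
  have FB: "(\<integral>\<^sup>+\<eta>. BB \<eta> \<partial>\<mu>) \<le> of_nat (4 * ?K - 1)"
  proof -
    have "(\<integral>\<^sup>+\<eta>. BB \<eta> \<partial>\<mu>) \<le> liminf (\<lambda>n. \<integral>\<^sup>+\<eta>. b n \<eta> \<partial>\<mu>)"
      unfolding BB_def by (rule nn_integral_liminf[OF mb])
    also have "\<dots> = of_nat (4 * ?K - 1)" by (simp only: Eb) (simp add: Liminf_const)
    finally show ?thesis .
  qed
  have AEst: "AE \<eta> in \<mu>. stabilizable \<eta>" using SM by (simp add: stabilizable_measure_def)
  have pt: "SS \<eta> = ennreal (real_of_int (stab \<eta> origin)) \<and> BB \<eta> = of_nat (\<eta> origin) + RR \<eta>
            \<and> SS \<eta> + RR \<eta> = of_nat (4 * ?K - 1)" if sb: "stabilizable \<eta>" for \<eta> :: "'d config"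
  proof -
    define s where "s = stab \<eta> origin"
    obtain N where N: "\<forall>n\<ge>N. xi n \<eta> origin = s" using stab_props(1)[OF sb] unfolding s_def by blast
    have sle: "s \<le> 2 * int ?K - 1" unfolding s_def by (rule stab_props(2)[OF sb])
    have sge: "0 \<le> s" using N xi_bounds[of N \<eta> origin] by auto
    have K: "?K \<ge> 1" by (simp add: Suc_le_eq)
    then have Ki: "int ?K \<ge> 1" by simp
    have S1: "SS \<eta> = of_nat (nat s)" unfolding SS_def
      by (rule liminf_evc[of N]) (simp add: a_def N)
    have R1: "RR \<eta> = of_nat (nat (int (4 * ?K) - 1 - s))" unfolding RR_def
      by (rule liminf_evc[of N]) (simp add: r_def N)
    have B1: "BB \<eta> = of_nat (nat (int (4 * ?K) - 1 + int (\<eta> origin) - s))" unfolding BB_def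
      by (rule liminf_evc[of N]) (simp add: b_def N)
    have e1: "nat (int (4 * ?K) - 1 + int (\<eta> origin) - s) = \<eta> origin + nat (int (4 * ?K) - 1 - s)"
      using sle Ki by simp
    have e2: "nat s + nat (int (4 * ?K) - 1 - s) = 4 * ?K - 1"
      using sle sge Ki by simp
    have "SS \<eta> + RR \<eta> = of_nat (nat s + nat (int (4 * ?K) - 1 - s))" unfolding S1 R1 by simp
    then have "SS \<eta> + RR \<eta> = of_nat (4 * ?K - 1)" unfolding e2 .
    moreover have "BB \<eta> = of_nat (\<eta> origin) + RR \<eta>" unfolding B1 R1 e1 by simp
    moreover have "SS \<eta> = ennreal (real_of_int (stab \<eta> origin))" unfolding S1 s_def of_nat_nat_enn ..
    ultimately show ?thesis by blast
  qed
  have i1: "(\<integral>\<^sup>+\<eta>. ennreal (real_of_int (stab \<eta> origin)) \<partial>\<mu>) = (\<integral>\<^sup>+\<eta>. SS \<eta> \<partial>\<mu>)"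
    by (rule nn_integral_cong_AE) (use AEst pt in auto)
  have i2: "(\<integral>\<^sup>+\<eta>. BB \<eta> \<partial>\<mu>) = \<rho> + (\<integral>\<^sup>+\<eta>. RR \<eta> \<partial>\<mu>)"
  proof -
    have "(\<integral>\<^sup>+\<eta>. BB \<eta> \<partial>\<mu>) = (\<integral>\<^sup>+\<eta>. of_nat (\<eta> origin) + RR \<eta> \<partial>\<mu>)"
      by (rule nn_integral_cong_AE) (use AEst pt in auto)
    also have "\<dots> = \<rho> + (\<integral>\<^sup>+\<eta>. RR \<eta> \<partial>\<mu>)"
      unfolding \<rho>_def using meta mRR by (simp add: nn_integral_add)
    finally show ?thesis .
  qed
  have i3: "(\<integral>\<^sup>+\<eta>. SS \<eta> \<partial>\<mu>) + (\<integral>\<^sup>+\<eta>. RR \<eta> \<partial>\<mu>) = of_nat (4 * ?K - 1)"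
  proof -
    have "(\<integral>\<^sup>+\<eta>. SS \<eta> \<partial>\<mu>) + (\<integral>\<^sup>+\<eta>. RR \<eta> \<partial>\<mu>) = (\<integral>\<^sup>+\<eta>. SS \<eta> + RR \<eta> \<partial>\<mu>)"
      using mSS mRR by (simp add: nn_integral_add)
    also have "\<dots> = (\<integral>\<^sup>+\<eta>. of_nat (4 * ?K - 1) \<partial>\<mu>)"
      by (rule nn_integral_cong_AE) (use AEst pt in auto)
    also have "\<dots> = of_nat (4 * ?K - 1)" by (rule int_const)
    finally show ?thesis .
  qed
  have Rfin: "(\<integral>\<^sup>+\<eta>. RR \<eta> \<partial>\<mu>) \<noteq> \<infinity>"
  proof
    assume "(\<integral>\<^sup>+\<eta>. RR \<eta> \<partial>\<mu>) = \<infinity>"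
    then have "(\<integral>\<^sup>+\<eta>. SS \<eta> \<partial>\<mu>) + (\<integral>\<^sup>+\<eta>. RR \<eta> \<partial>\<mu>) = \<infinity>" by simp
    with i3 show False by simp
  qed
  have "\<rho> + (\<integral>\<^sup>+\<eta>. RR \<eta> \<partial>\<mu>) \<le> (\<integral>\<^sup>+\<eta>. SS \<eta> \<partial>\<mu>) + (\<integral>\<^sup>+\<eta>. RR \<eta> \<partial>\<mu>)"
    using FB i2 i3 by simp
  then have "\<rho> \<le> (\<integral>\<^sup>+\<eta>. SS \<eta> \<partial>\<mu>)"
    using Rfin by (metis add.commute ennreal_add_left_cancel_le)
  then have eq: "(\<integral>\<^sup>+\<eta>. SS \<eta> \<partial>\<mu>) = \<rho>" using FS by simp
  have "(\<integral>\<^sup>+\<eta>. SS \<eta> \<partial>\<mu>) \<le> of_nat (4 * ?K - 1)" unfolding le_iff_add using i3[symmetric] by blast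
  then have "\<rho> \<le> of_nat (4 * ?K - 1)" using eq by simp
  then have "\<rho> < \<infinity>" by (rule le_less_trans) (simp add: of_nat_less_top)
  then show ?thesis using i1 eq unfolding \<rho>_def by simp
qed

theorem lemma2p10:
  fixes \<mu> :: "(('d::finite) config) measure"
  assumes "prob_space \<mu>" and "sets \<mu> = sets config_space" and "transl_inv \<mu>"
  shows "((\<integral>\<^sup>+ \<eta>. of_nat (\<eta> origin) \<partial>\<mu>) < \<infinity> \<and> stabilizable_measure \<mu> \<longrightarrow>
            (\<integral>\<^sup>+ \<eta>. ennreal (real_of_int (stab \<eta> origin)) \<partial>\<mu>) = (\<integral>\<^sup>+ \<eta>. of_nat (\<eta> origin) \<partial>\<mu>))
       \<and> ((\<integral>\<^sup>+ \<eta>. of_nat (\<eta> origin) \<partial>\<mu>) = \<infinity> \<longrightarrow> \<not> stabilizable_measure \<mu>)"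
  using main_lemma[OF assms] by auto


end
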